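(* Let $H$ be a real symmetric positive definite $n\times n$ matrix, $c\in\mathbb{R}^n$, $d\in\mathbb{R}$, $\epsilon>0$, and $h(x)=x^THx+2c^Tx+d$. For any $(x,t)\in\mathbb{R}^n\times\mathbb{R}$ the following are equivalent: (i) $t\ge\bar h_\epsilon(x)$; (ii) there exist reals $s,\mu$ such that $t-s^2+c^TH^{-1}c-d\ge0$ and $$\begin{bmatrix} sI_n & H^{1/2}x+H^{-1/2}c & \epsilon H^{1/2}\\ (H^{1/2}x+H^{-1/2}c)^T & s-\mu & 0\\ \epsilon H^{1/2} & 0 & \mu I_n\end{bmatrix}\succeq0.$$
   Context: $\bar h_\epsilon(x):=\sup\{h(x'):\|x'-x\|_2\le\epsilon\}$. $H^{1/2}$ is the positive definite square root of $H$ and $H^{-1/2}$ its inverse. $M\succeq0$ means positive semidefinite. *)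

theory Defs
  imports "HOL-Analysis.Analysis"
begin

definition sym_mat :: "real^'n^'n \<Rightarrow> bool" where
  "sym_mat A \<longleftrightarrow> transpose A = A"

definition pos_def :: "real^'n^'n \<Rightarrow> bool" where
  "pos_def A \<longleftrightarrow> sym_mat A \<and> (\<forall>v. v \<noteq> 0 \<longrightarrow> v \<bullet> (A *v v) > 0)"

definition psd :: "real^'n^'n \<Rightarrow> bool" where
  "psd A \<longleftrightarrow> sym_mat A \<and> (\<forall>v. v \<bullet> (A *v v) \<ge> 0)"

definition mat_sqrt :: "real^'n^'n \<Rightarrow> real^'n^'n" where
  "mat_sqrt H = (THE S. pos_def S \<and> S ** S = H)"

definition mat_inv_sqrt :: "real^'n^'n \<Rightarrow> real^'n^'n" where
  "mat_inv_sqrt H = matrix_inv (mat_sqrt H)"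

definition quad :: "real^'n^'n \<Rightarrow> real^'n \<Rightarrow> real \<Rightarrow> real^'n \<Rightarrow> real" where
  "quad H c d x = x \<bullet> (H *v x) + 2 * (c \<bullet> x) + d"

definition robust_sup :: "(real^'n \<Rightarrow> real) \<Rightarrow> real \<Rightarrow> real^'n \<Rightarrow> real" where
  "robust_sup h \<epsilon> x = Sup {h x' | x'. norm (x' - x) \<le> \<epsilon>}"

text \<open>The (2n+1)x(2n+1) block matrix, rows/columns indexed by 'n + (unit + 'n):
  first block of size n, then one scalar row, then block of size n.\<close>
definition block_mat ::
  "real^'n^'n \<Rightarrow> real^'n \<Rightarrow> real^'n \<Rightarrow> real \<Rightarrow> real \<Rightarrow> real \<Rightarrow> real^('n + (unit + 'n))^('n + (unit + 'n))" where
  "block_mat H c x \<epsilon> s \<mu> =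
    (let R = mat_sqrt H; u = R *v x + mat_inv_sqrt H *v c in
     (\<chi> p q. case (p, q) of
        (Inl i, Inl j) \<Rightarrow> s * (mat 1 :: real^'n^'n) $ i $ j
      | (Inl i, Inr (Inl _)) \<Rightarrow> u $ i
      | (Inl i, Inr (Inr j)) \<Rightarrow> \<epsilon> * R $ i $ j
      | (Inr (Inl _), Inl j) \<Rightarrow> u $ j
      | (Inr (Inl _), Inr (Inl _)) \<Rightarrow> s - \<mu>
      | (Inr (Inl _), Inr (Inr _)) \<Rightarrow> 0
      | (Inr (Inr i), Inl j) \<Rightarrow> \<epsilon> * R $ i $ j
      | (Inr (Inr _), Inr (Inl _)) \<Rightarrow> 0
      | (Inr (Inr i), Inr (Inr j)) \<Rightarrow> \<mu> * (mat 1 :: real^'n^'n) $ i $ j))"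

end

theory Submission
  imports Defs
begin


lemma sum_UNIV_Plus: "sum f (UNIV::('a::finite + 'b::finite) set) = sum (f o Inl) UNIV + sum (f o Inr) UNIV"
  by (metis UNIV_Plus_UNIV finite_class.finite_UNIV sum.Plus)

lemma sym_inner: assumes "sym_mat A" shows "x \<bullet> (A *v y) = (A *v x) \<bullet> y"
proof -
  have "x \<bullet> (A *v y) = (x v* A) \<bullet> y" by (simp add: dot_lmul_matrix)
  also have "x v* A = A *v x" using assms vector_transpose_matrix[of x A] unfolding sym_mat_def by simp
  finally show ?thesis .
qed

lemma inner_sym: fixes A :: "real^'n^'n"
  assumes "\<And>x y. x \<bullet> (A *v y) = (A *v x) \<bullet> y" shows "sym_mat A"
proof -
  have ax: "axis i 1 \<bullet> (A *v axis j 1) = A$i$j" for i j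
    by (simp add: inner_axis' matrix_vector_mul_component inner_axis)
  have "A $ i $ j = A $ j $ i" for i j
    using assms[of "axis i 1" "axis j 1"]
    by (simp add: ax inner_commute)
  then show ?thesis unfolding sym_mat_def transpose_def by (simp add: vec_eq_iff)
qed



lemma quad_nonpos_lin0:
  fixes a b :: real assumes "\<And>t. a * t + b * t^2 \<le> 0" shows "a = 0"
proof (rule ccontr)
  assume a: "a \<noteq> 0"
  define r where "r = 1 / (\<bar>b\<bar> + 1)"
  have r: "r > 0" "\<bar>b\<bar> * r < 1" unfolding r_def by (auto simp: field_simps)
  have e: "a * (a*r) + b * (a*r)^2 = a^2 * r * (1 + b * r)" by (simp add: power2_eq_square algebra_simps)
  have "- (b*r) \<le> \<bar>b\<bar> * r" using r by (metis abs_ge_minus_self abs_mult abs_of_pos)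
  then have "1 + b*r > 0" using r by linarith
  moreover have "a^2 > 0" using a by simp
  ultimately have "a * (a*r) + b * (a*r)^2 > 0" unfolding e using r by simp
  then show False using assms[of "a*r"] by simp
qed

lemma spectral_subspace:
  fixes A :: "real^'n^'n"
  assumes sym: "sym_mat A"
  shows "subspace S \<Longrightarrow> (\<forall>x\<in>S. A *v x \<in> S) \<Longrightarrow>
    \<exists>B. B \<subseteq> S \<and> finite B \<and> pairwise orthogonal B \<and> (\<forall>b\<in>B. norm b = 1 \<and> (\<exists>l. A *v b = l *\<^sub>R b)) \<and> span B = S"
proof (induction "dim S" arbitrary: S rule: less_induct)
  case less
  show ?case
  proof (cases "S = {0}")
    case True
    then show ?thesis by (intro exI[of _ "{}"]) auto
  next
    case False
    then obtain x0 where x0: "x0 \<in> S" "x0 \<noteq> 0" using less.prems subspace_0 by blast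
    define K where "K = S \<inter> sphere 0 1"
    have "compact K" unfolding K_def using closed_subspace[OF less.prems(1)] compact_sphere
      by (simp add: closed_Int_compact)
    moreover have "x0 /\<^sub>R norm x0 \<in> K" using x0 less.prems(1) by (simp add: K_def subspace_scale)
    hence "K \<noteq> {}" by auto
    moreover have "continuous_on K (\<lambda>v. v \<bullet> (A *v v))"
      by (intro continuous_intros linear_continuous_on matrix_vector_mul_bounded_linear)
    ultimately obtain v where v: "v \<in> K" "\<And>y. y\<in>K \<Longrightarrow> y \<bullet> (A *v y) \<le> v \<bullet> (A *v v)"
      using continuous_attains_sup by metis
    define l where "l = v \<bullet> (A *v v)"
    have vS: "v \<in> S" and nv: "norm v = 1" using v(1) by (auto simp: K_def)
    have vv: "v \<bullet> v = 1" using nv by (simp add: norm_eq_1)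
    have bound: "y \<bullet> (A *v y) \<le> l * (y \<bullet> y)" if "y \<in> S" for y
    proof (cases "y = 0")
      case True then show ?thesis by simp
    next
      case False
      have "y /\<^sub>R norm y \<in> K" using that False less.prems(1) by (simp add: K_def subspace_scale)
      from v(2)[OF this] have "(y \<bullet> (A *v y)) / (norm y)^2 \<le> l"
        by (simp add: l_def matrix_vector_mult_scaleR power2_eq_square divide_inverse ac_simps)
      then show ?thesis using False by (simp add: divide_le_eq power2_norm_eq_inner mult.commute)
    qed
    have orth: "w \<bullet> (A *v v - l *\<^sub>R v) = 0" if w: "w \<in> S" for w
    proof -
      have "(2 * (w \<bullet> (A *v v) - l * (v \<bullet> w))) * t + (w \<bullet> (A*v w) - l * (w \<bullet> w)) * t^2 \<le> 0" for t
      proof -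
        have "v + t *\<^sub>R w \<in> S" using vS w less.prems(1) by (simp add: subspace_add subspace_scale)
        from bound[OF this] have
          "(v + t *\<^sub>R w) \<bullet> (A *v (v + t *\<^sub>R w)) \<le> l * ((v + t *\<^sub>R w) \<bullet> (v + t *\<^sub>R w))" .
        moreover have "v \<bullet> (A *v w) = w \<bullet> (A *v v)" using sym_inner[OF sym, of v w] by (simp add: inner_commute)
        ultimately show ?thesis
          by (simp add: matrix_vector_right_distrib matrix_vector_mult_scaleR inner_add_left inner_add_right
              inner_commute l_def vv power2_eq_square algebra_simps)
      qed
      from quad_nonpos_lin0[OF this] show ?thesis by (simp add: inner_diff_right inner_commute)
    qed
    have eig: "A *v v = l *\<^sub>R v"
    proof -
      have "A *v v - l *\<^sub>R v \<in> S" using less.prems vS by (simp add: subspace_diff subspace_scale)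
      from orth[OF this] show ?thesis by simp
    qed
    define S' where "S' = S \<inter> {w. v \<bullet> w = 0}"
    have subS': "subspace S'" unfolding S'_def by (intro subspace_inter less.prems(1) subspace_hyperplane)
    have invS': "\<forall>x\<in>S'. A *v x \<in> S'"
    proof
      fix x assume x: "x \<in> S'"
      have "v \<bullet> (A *v x) = (A *v v) \<bullet> x" by (rule sym_inner[OF sym])
      also have "\<dots> = 0" using x eig by (simp add: S'_def)
      finally show "A *v x \<in> S'" using x less.prems(2) by (simp add: S'_def)
    qed
    have "dim S' < dim S"
    proof -
      have "v \<notin> S'" using vv by (simp add: S'_def)
      then have "S' \<subset> S" using vS unfolding S'_def by blast
      then show ?thesis using subS' less.prems(1) by (metis leI nless_le subspace_dim_equal)
    qed
    from less.hyps[OF this subS' invS'] obtain B' where B': "B' \<subseteq> S'" "finite B'" "pairwise orthogonal B'"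
      "\<forall>b\<in>B'. norm b = 1 \<and> (\<exists>l. A *v b = l *\<^sub>R b)" "span B' = S'" by blast
    show ?thesis
    proof (intro exI[of _ "insert v B'"] conjI)
      show "insert v B' \<subseteq> S" using B'(1) vS by (auto simp: S'_def)
      show "finite (insert v B')" using B'(2) by simp
      show "pairwise orthogonal (insert v B')" using B'(1,3)
        by (auto simp: pairwise_insert S'_def orthogonal_def inner_commute)
      show "\<forall>b\<in>insert v B'. norm b = 1 \<and> (\<exists>l. A *v b = l *\<^sub>R b)" using B'(4) nv eig by auto
      show "span (insert v B') = S"
      proof
        show "span (insert v B') \<subseteq> S" using \<open>insert v B' \<subseteq> S\<close> less.prems(1) by (rule span_minimal)
        show "S \<subseteq> span (insert v B')"
        proof
          fix w assume w: "w \<in> S"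
          have "w - (v \<bullet> w) *\<^sub>R v \<in> S'" using w vS less.prems(1) vv
            by (simp add: S'_def subspace_diff subspace_scale inner_diff_right)
          hence "w - (v \<bullet> w) *\<^sub>R v \<in> span (insert v B')" using B'(5) span_mono[of B' "insert v B'"] by auto
          moreover have "(v \<bullet> w) *\<^sub>R v \<in> span (insert v B')" by (simp add: span_base span_scale)
          ultimately have "(w - (v \<bullet> w) *\<^sub>R v) + (v \<bullet> w) *\<^sub>R v \<in> span (insert v B')" by (rule span_add)
          then show "w \<in> span (insert v B')" by simp
        qed
      qed
    qed
  qed
qed



lemma mv_sum: "(A::real^'n^'m) *v (\<Sum>b\<in>B. g b) = (\<Sum>b\<in>B. A *v g b)"
  by (induct B rule: infinite_finite_induct) (simp_all add: matrix_vector_right_distrib)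

lemma pd_ker: "pos_def A \<Longrightarrow> A *v x = 0 \<Longrightarrow> x = 0"
  unfolding pos_def_def by (metis inner_zero_right less_irrefl)

lemma pd_invertible: fixes A :: "real^'n^'n" assumes "pos_def A" shows "invertible A"
  using matrix_left_invertible_ker[of A] pd_ker[OF assms] invertible_left_inverse by blast

lemma inv_props: fixes A :: "real^'n^'n" assumes "invertible A"
  shows "A ** matrix_inv A = mat 1" "matrix_inv A ** A = mat 1"
proof -
  have "\<exists>A'. A ** A' = mat 1 \<and> A' ** A = mat 1" using assms unfolding invertible_def .
  from someI_ex[OF this] show "A ** matrix_inv A = mat 1" "matrix_inv A ** A = mat 1"
    unfolding matrix_inv_def by auto
qed

lemma spectral:
  fixes A :: "real^'n^'n"
  assumes "sym_mat A"
  obtains B where "finite B" "pairwise orthogonal B" "\<And>b. b\<in>B \<Longrightarrow> norm b = 1"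
    "\<And>b. b\<in>B \<Longrightarrow> A *v b = (b \<bullet> (A *v b)) *\<^sub>R b" "span B = UNIV"
proof -
  obtain B where B: "finite B" "pairwise orthogonal B" "\<forall>b\<in>B. norm b = 1 \<and> (\<exists>l. A *v b = l *\<^sub>R b)" "span B = UNIV"
    using spectral_subspace[OF assms, of UNIV] by auto
  have "A *v b = (b \<bullet> (A *v b)) *\<^sub>R b" if bB: "b \<in> B" for b
  proof -
    obtain l where l: "A *v b = l *\<^sub>R b" and n: "norm b = 1" using B(3) bB by blast
    have "b \<bullet> b = 1" using n by (simp add: norm_eq_1)
    then show ?thesis using l by simp
  qed
  then show ?thesis using that B by auto
qed

lemma onb_delta:
  assumes "pairwise orthogonal B" "\<And>b. b\<in>B \<Longrightarrow> norm b = 1" "b \<in> B" "b' \<in> B"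
  shows "b' \<bullet> b = (if b' = b then 1 else 0)"
  using assms by (auto simp: pairwise_def orthogonal_def norm_eq_1)

lemma onb_sum_delta:
  fixes g :: "real^'n \<Rightarrow> real"
  assumes "finite B" "pairwise orthogonal B" "\<And>b. b\<in>B \<Longrightarrow> norm b = 1" "b \<in> B"
  shows "(\<Sum>b'\<in>B. g b' * (b' \<bullet> b)) = g b"
proof -
  have "(\<Sum>b'\<in>B. g b' * (b' \<bullet> b)) = (\<Sum>b'\<in>B. if b' = b then g b else 0)"
    by (rule sum.cong) (auto simp: onb_delta[OF assms(2,3,4)])
  also have "\<dots> = g b" using assms(1,4) by simp
  finally show ?thesis .
qed

lemma sqrt_exists:
  fixes H :: "real^'n^'n" assumes H: "pos_def H"
  shows "\<exists>S. pos_def S \<and> S ** S = H"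
proof -
  have symH: "sym_mat H" using H by (simp add: pos_def_def)
  obtain B where B: "finite B" "pairwise orthogonal B" "\<And>b. b\<in>B \<Longrightarrow> norm b = 1"
    "\<And>b. b\<in>B \<Longrightarrow> H *v b = (b \<bullet> (H *v b)) *\<^sub>R b" "span B = UNIV"
    using spectral[OF symH] by blast
  define e where "e b = b \<bullet> (H *v b)" for b
  have epos: "e b > 0" if "b \<in> B" for b
    using H B(3)[OF that] unfolding pos_def_def e_def by (metis norm_zero zero_neq_one)
  have He: "H *v b = e b *\<^sub>R b" if "b \<in> B" for b using B(4)[OF that] by (simp add: e_def)
  have expand: "(\<Sum>b\<in>B. (v \<bullet> b) *\<^sub>R b) = v" for v
    using orthonormal_basis_expand[OF B(2) B(3)] B(1,5) by simp
  define f where "f v = (\<Sum>b\<in>B. (sqrt (e b) * (v \<bullet> b)) *\<^sub>R b)" for v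
  have lin: "linear f"
    by (rule linearI) (simp_all add: f_def inner_add_left distrib_left scaleR_add_left sum.distrib
        scaleR_sum_right ac_simps)
  define S where "S = matrix f"
  have Sv: "S *v v = f v" for v unfolding S_def using matrix_vector_mul(2)[OF lin] by metis
  have fsym: "x \<bullet> f y = f x \<bullet> y" for x y
    by (simp add: f_def inner_sum_right inner_sum_left inner_commute ac_simps)
  have symS: "sym_mat S" by (rule inner_sym) (simp add: Sv fsym)
  have fb: "f v \<bullet> b = sqrt (e b) * (v \<bullet> b)" if "b \<in> B" for v b
  proof -
    have "f v \<bullet> b = (\<Sum>b'\<in>B. (sqrt (e b') * (v \<bullet> b')) * (b' \<bullet> b))"
      by (simp add: f_def inner_sum_left)
    also have "\<dots> = sqrt (e b) * (v \<bullet> b)" by (rule onb_sum_delta[OF B(1,2,3) that])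
    finally show ?thesis .
  qed
  have pdS: "pos_def S"
    unfolding pos_def_def
  proof (intro conjI allI impI)
    show "sym_mat S" by (rule symS)
    fix v :: "real^'n" assume v: "v \<noteq> 0"
    have "\<exists>b\<in>B. v \<bullet> b \<noteq> 0"
    proof (rule ccontr)
      assume "\<not> ?thesis"
      then have "(\<Sum>b\<in>B. (v \<bullet> b) *\<^sub>R b) = 0" by simp
      then show False using expand[of v] v by simp
    qed
    then obtain b0 where b0: "b0 \<in> B" "v \<bullet> b0 \<noteq> 0" by blast
    have "v \<bullet> (S *v v) = (\<Sum>b\<in>B. sqrt (e b) * (v \<bullet> b)^2)"
      by (simp add: Sv f_def inner_sum_right power2_eq_square ac_simps)
    also have "\<dots> > 0"
    proof (rule sum_pos2[OF B(1) b0(1)])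
      have a: "0 < sqrt (e b0)" using epos[OF b0(1)] by (rule real_sqrt_gt_zero)
      have c: "0 < (v \<bullet> b0)\<^sup>2" using b0(2) by simp
      show "0 < sqrt (e b0) * (v \<bullet> b0)\<^sup>2" using mult_pos_pos[OF a c] .
      show "0 \<le> sqrt (e b) * (v \<bullet> b)\<^sup>2" if "b \<in> B" for b
        using mult_nonneg_nonneg[OF real_sqrt_ge_zero[OF less_imp_le[OF epos[OF that]]] zero_le_power2] .
    qed
    finally show "v \<bullet> (S *v v) > 0" .
  qed
  have "S ** S = H"
    unfolding matrix_eq
  proof
    fix v
    have "(S ** S) *v v = f (f v)" by (simp add: matrix_vector_mul_assoc[symmetric] Sv)
    also have "\<dots> = (\<Sum>b\<in>B. (e b * (v \<bullet> b)) *\<^sub>R b)"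
      unfolding f_def[of "f v"] by (intro sum.cong refl) (simp add: fb epos less_imp_le)
    also have "\<dots> = (\<Sum>b\<in>B. ((H *v v) \<bullet> b) *\<^sub>R b)"
    proof (intro sum.cong refl)
      fix b assume b: "b \<in> B"
      have "(H *v v) \<bullet> b = v \<bullet> (H *v b)" using sym_inner[OF symH, of v b] by (simp add: inner_commute)
      then show "(e b * (v \<bullet> b)) *\<^sub>R b = ((H *v v) \<bullet> b) *\<^sub>R b" by (simp add: He[OF b])
    qed
    also have "\<dots> = H *v v" by (rule expand)
    finally show "(S ** S) *v v = H *v v" .
  qed
  with pdS show ?thesis by blast
qed

lemma sqrt_unique:
  fixes S1 S2 :: "real^'n^'n"
  assumes p1: "pos_def S1" and p2: "pos_def S2" and eq: "S1 ** S1 = S2 ** S2"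
  shows "S1 = S2"
proof -
  define D where "D = S1 - S2"
  have s1: "sym_mat S1" and s2: "sym_mat S2" using p1 p2 by (auto simp: pos_def_def)
  have symD: "sym_mat D"
    by (rule inner_sym) (simp add: D_def matrix_vector_mult_diff_rdistrib inner_diff_right inner_diff_left
        sym_inner[OF s1] sym_inner[OF s2])
  have key: "S1 *v (D *v v) + D *v (S2 *v v) = 0" for v
  proof -
    have "S1 *v (D *v v) + D *v (S2 *v v) = S1 *v (S1 *v v) - S2 *v (S2 *v v)"
      by (simp add: D_def matrix_vector_mult_diff_rdistrib matrix_vector_mult_diff_distrib)
    also have "\<dots> = 0" using eq by (simp add: matrix_vector_mul_assoc)
    finally show ?thesis .
  qed
  obtain B where B: "finite B" "pairwise orthogonal B" "\<And>b. b\<in>B \<Longrightarrow> norm b = 1"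
    "\<And>b. b\<in>B \<Longrightarrow> D *v b = (b \<bullet> (D *v b)) *\<^sub>R b" "span B = UNIV"
    using spectral[OF symD] by blast
  have Db: "D *v b = 0" if b: "b \<in> B" for b
  proof -
    define l where "l = b \<bullet> (D *v b)"
    have Dbl: "D *v b = l *\<^sub>R b" using B(4)[OF b] by (simp add: l_def)
    have bnz: "b \<noteq> 0" using B(3)[OF b] by auto
    have "0 = b \<bullet> (S1 *v (D *v b) + D *v (S2 *v b))" using key[of b] by simp
    also have "\<dots> = l * (b \<bullet> (S1 *v b)) + (D *v b) \<bullet> (S2 *v b)"
      by (simp add: inner_add_right Dbl matrix_vector_mult_scaleR sym_inner[OF symD])
    also have "\<dots> = l * (b \<bullet> (S1 *v b) + b \<bullet> (S2 *v b))" by (simp add: Dbl algebra_simps)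
    finally have "l * (b \<bullet> (S1 *v b) + b \<bullet> (S2 *v b)) = 0" by simp
    moreover have "b \<bullet> (S1 *v b) + b \<bullet> (S2 *v b) > 0"
      using p1 p2 bnz unfolding pos_def_def by (simp add: add_pos_pos)
    ultimately have "l = 0" by simp
    then show ?thesis using Dbl by simp
  qed
  have "D = 0"
    unfolding matrix_eq
  proof
    fix v
    have "D *v v = D *v (\<Sum>b\<in>B. (v \<bullet> b) *\<^sub>R b)"
      using orthonormal_basis_expand[OF B(2) B(3)] B(1,5) by simp
    also have "\<dots> = 0" by (simp add: mv_sum matrix_vector_mult_scaleR Db)
    finally show "D *v v = 0 *v v" by simp
  qed
  then show ?thesis by (simp add: D_def)
qed

lemma mat_sqrt_props:
  fixes H :: "real^'n^'n" assumes "pos_def H"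
  shows "pos_def (mat_sqrt H)" "mat_sqrt H ** mat_sqrt H = H"
proof -
  have "\<exists>!S. pos_def S \<and> S ** S = H"
    using sqrt_exists[OF assms] sqrt_unique by metis
  from theI'[OF this] show "pos_def (mat_sqrt H)" "mat_sqrt H ** mat_sqrt H = H"
    unfolding mat_sqrt_def by auto
qed



lemma small_lin_bound:
  fixes a b c :: real
  assumes "\<And>\<tau>. 0 < \<tau> \<Longrightarrow> \<tau> \<le> 1 \<Longrightarrow> a \<le> \<tau> * (b + \<tau> * c)"
  shows "a \<le> 0"
proof (rule ccontr)
  assume "\<not> a \<le> 0" hence a: "a > 0" by simp
  define K where "K = \<bar>b\<bar> + \<bar>c\<bar> + 1"
  have K: "K \<ge> 1" unfolding K_def by simp
  define \<tau> where "\<tau> = min 1 (a / (2*K))"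
  have t: "0 < \<tau>" "\<tau> \<le> 1" "\<tau> \<le> a / (2*K)" using a K unfolding \<tau>_def by auto
  have "b + \<tau> * c \<le> \<bar>b\<bar> + \<bar>c\<bar>"
  proof -
    have "\<tau> * c \<le> \<bar>\<tau> * c\<bar>" by simp
    also have "\<dots> \<le> \<bar>c\<bar>" using t by (simp add: abs_mult mult_left_le_one_le)
    finally show ?thesis by linarith
  qed
  hence "b + \<tau> * c \<le> K" unfolding K_def by linarith
  hence "\<tau> * (b + \<tau> * c) \<le> \<tau> * K" using t by (simp add: mult_left_mono)
  also have "\<dots> \<le> a / (2*K) * K" using mult_right_mono[OF t(3), of K] K by simp
  also have "\<dots> = a / 2" using K by simp
  finally have "\<tau> * (b + \<tau> * c) < a" using a by linarith
  with assms[OF t(1,2)] show False by linarith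
qed

lemma mv_minus: "(A::real^'n^'m) *v (- x) = - (A *v x)"
  by (simp add: matrix_vector_mult_def vec_eq_iff sum_negf)

lemma expand_phi:
  fixes R :: "real^'n^'n"
  assumes "sym_mat R"
  shows "(u + R *v (d + z)) \<bullet> (u + R *v (d + z)) =
     (u + R *v d) \<bullet> (u + R *v d) + 2 * (z \<bullet> (R *v (u + R *v d))) + (R *v z) \<bullet> (R *v z)"
proof -
  have "(u + R *v d) \<bullet> (R *v z) = z \<bullet> (R *v (u + R *v d))"
    using sym_inner[OF assms, of "u + R *v d" z] by (simp add: inner_commute)
  then show ?thesis
    by (simp add: matrix_vector_right_distrib inner_add_left inner_add_right inner_commute)
qed

lemma s_lemma:
  fixes R :: "real^'n^'n" and u :: "real^'n"
  assumes symR: "sym_mat R" and pdR: "pos_def R" and e: "\<epsilon> > 0"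
  shows "\<exists>\<kappa> ds. norm ds \<le> \<epsilon> \<and> (\<forall>z. (R *v z) \<bullet> (R *v z) \<le> \<kappa> * (z \<bullet> z)) \<and>
     (\<forall>d. (u + R *v d) \<bullet> (u + R *v d) + \<kappa> * (\<epsilon>^2 - d \<bullet> d) \<le> (u + R *v ds) \<bullet> (u + R *v ds))"
proof -
  define \<phi> where "\<phi> d = (u + R *v d) \<bullet> (u + R *v d)" for d
  have "continuous_on (cball 0 \<epsilon>) \<phi>" unfolding \<phi>_def
    by (intro continuous_intros linear_continuous_on matrix_vector_mul_bounded_linear)
  moreover have "cball (0::real^'n) \<epsilon> \<noteq> {}" using e by simp
  ultimately obtain ds where ds: "ds \<in> cball 0 \<epsilon>" "\<And>d. d \<in> cball 0 \<epsilon> \<Longrightarrow> \<phi> d \<le> \<phi> ds"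
    using continuous_attains_sup[OF compact_cball] by metis
  define p where "p = R *v (u + R *v ds)"
  have exp: "\<phi> (ds + z) = \<phi> ds + 2 * (z \<bullet> p) + (R *v z) \<bullet> (R *v z)" for z
    unfolding \<phi>_def p_def by (rule expand_phi[OF symR])
  have Rpos: "(R *v z) \<bullet> (R *v z) > 0" if "z \<noteq> 0" for z
    proof -
    have "R *v z \<noteq> 0" using pd_ker[OF pdR, of z] that by blast
    then show ?thesis by simp
  qed
  have nds: "norm ds = \<epsilon>"
  proof (rule ccontr)
    assume "norm ds \<noteq> \<epsilon>"
    hence lt: "norm ds < \<epsilon>" using ds(1) by simp
    obtain i :: 'n where True by simp
    define z where "z = (\<epsilon> - norm ds) *\<^sub>R axis i (1::real)"
    have nz: "norm z = \<epsilon> - norm ds" unfolding z_def using lt by (simp add: norm_axis_1)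
    hence z0: "z \<noteq> 0" using lt by auto
    have "ds + z \<in> cball 0 \<epsilon>" using norm_triangle_ineq[of ds z] nz by (simp add: mem_cball_0)
    moreover have "ds + (- z) \<in> cball 0 \<epsilon>" using norm_triangle_ineq[of ds "-z"] nz by (simp add: mem_cball_0)
    ultimately have "\<phi> (ds + z) \<le> \<phi> ds" "\<phi> (ds + (-z)) \<le> \<phi> ds" using ds(2) by auto
    moreover have "\<phi> (ds + z) + \<phi> (ds + (-z)) = 2 * \<phi> ds + 2 * ((R *v z) \<bullet> (R *v z))"
      unfolding exp by (simp add: mv_minus)
    ultimately show False using Rpos[OF z0] by linarith
  qed
  have dsds: "ds \<bullet> ds = \<epsilon>^2" using nds by (simp add: power2_norm_eq_inner[symmetric])
  have sphere: "2 * ((d - ds) \<bullet> p) + (R *v (d - ds)) \<bullet> (R *v (d - ds)) \<le> 0" if "norm d = \<epsilon>" for d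
  proof -
    have "\<phi> (ds + (d - ds)) \<le> \<phi> ds" using ds(2) that by (simp add: mem_cball_0)
    then show ?thesis unfolding exp by simp
  qed
  obtain lam where lamp: "lam \<ge> 0" "p = lam *\<^sub>R ds"
  proof (cases "p = 0")
    case True then show ?thesis using that[of 0] by simp
  next
    case False
    define d where "d = (\<epsilon> / norm p) *\<^sub>R p"
    have nd: "norm d = \<epsilon>" unfolding d_def using False e by simp
    have "(d - ds) \<bullet> p \<le> 0"
      using sphere[OF nd] inner_ge_zero[of "R *v (d - ds)"] by linarith
    moreover have "d \<bullet> p = \<epsilon> * norm p" unfolding d_def using False
      by (simp add: power2_norm_eq_inner[symmetric] power2_eq_square)
    ultimately have "ds \<bullet> p \<ge> norm ds * norm p" using nds by (simp add: inner_diff_left)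
    moreover have "ds \<bullet> p \<le> norm ds * norm p" by (rule norm_cauchy_schwarz)
    ultimately have "ds \<bullet> p = norm ds * norm p" by simp
    hence "norm ds *\<^sub>R p = norm p *\<^sub>R ds" by (simp add: norm_cauchy_schwarz_eq)
    hence "p = (norm p / \<epsilon>) *\<^sub>R ds" using nds e
    proof -
      have "p = (1/\<epsilon>) *\<^sub>R (\<epsilon> *\<^sub>R p)" using e by simp
      also have "\<dots> = (1/\<epsilon>) *\<^sub>R (norm p *\<^sub>R ds)" using \<open>norm ds *\<^sub>R p = norm p *\<^sub>R ds\<close> nds by simp
      also have "\<dots> = (norm p / \<epsilon>) *\<^sub>R ds" by simp
      finally show ?thesis .
    qed

    then show ?thesis using that[of "norm p / \<epsilon>"] e by simp
  qed
  have so1: "(R *v y) \<bullet> (R *v y) \<le> lam * (y \<bullet> y)" if y: "y \<bullet> ds \<noteq> 0" for y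
  proof -
    have y0: "y \<noteq> 0" using y by auto
    have yy: "y \<bullet> y > 0" using y0 by simp
    define \<sigma> where "\<sigma> = - 2 * (y \<bullet> ds) / (y \<bullet> y)"
    have s0: "\<sigma> \<noteq> 0" unfolding \<sigma>_def using y yy by simp
    have sy: "\<sigma> * (y \<bullet> y) = - 2 * (y \<bullet> ds)" unfolding \<sigma>_def using yy by simp
    have "(ds + \<sigma> *\<^sub>R y) \<bullet> (ds + \<sigma> *\<^sub>R y) = ds \<bullet> ds + \<sigma> * (2 * (y \<bullet> ds) + \<sigma> * (y \<bullet> y))"
      by (simp add: inner_add_left inner_add_right inner_commute algebra_simps)
    also have "\<dots> = \<epsilon>^2" using sy dsds by simp
    finally have "norm (ds + \<sigma> *\<^sub>R y) = \<epsilon>" using e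
      by (metis norm_eq_sqrt_inner real_sqrt_abs abs_of_pos)
    from sphere[OF this] have
      "2 * (\<sigma> * (y \<bullet> p)) + \<sigma>^2 * ((R *v y) \<bullet> (R *v y)) \<le> 0"
      by (simp add: matrix_vector_mult_scaleR power2_eq_square ac_simps)
    moreover have "y \<bullet> p = lam * (y \<bullet> ds)" using lamp by simp
    ultimately have "\<sigma>^2 * ((R *v y) \<bullet> (R *v y)) \<le> \<sigma>^2 * (lam * (y \<bullet> y))"
      using sy by (simp add: power2_eq_square algebra_simps)
    moreover have "\<sigma>^2 > 0" using s0 by simp
    ultimately show ?thesis by simp
  qed
  have so: "(R *v y) \<bullet> (R *v y) \<le> lam * (y \<bullet> y)" for y
  proof (cases "y \<bullet> ds = 0")
    case False then show ?thesis by (rule so1)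
  next
    case True
    have "(R *v y) \<bullet> (R *v y) - lam * (y \<bullet> y) \<le>
          \<tau> * ((- 2 * ((R *v y) \<bullet> (R *v ds))) + \<tau> * (lam * \<epsilon>^2 - (R *v ds) \<bullet> (R *v ds)))"
      if t: "0 < \<tau>" "\<tau> \<le> 1" for \<tau>
    proof -
      have "(y + \<tau> *\<^sub>R ds) \<bullet> ds = \<tau> * \<epsilon>^2" using True dsds by (simp add: inner_add_left)
      hence "(y + \<tau> *\<^sub>R ds) \<bullet> ds \<noteq> 0" using t e by simp
      from so1[OF this] show ?thesis using True dsds
        by (simp add: matrix_vector_right_distrib matrix_vector_mult_scaleR inner_add_left inner_add_right
            inner_commute power2_eq_square algebra_simps)
    qed
    from small_lin_bound[OF this] show ?thesis by simp
  qed
  show ?thesis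
  proof (intro exI conjI allI)
    show "norm ds \<le> \<epsilon>" using nds by simp
    show "(R *v z) \<bullet> (R *v z) \<le> lam * (z \<bullet> z)" for z by (rule so)
    fix d
    define z where "z = d - ds"
    have A: "\<phi> d = \<phi> ds + 2 * lam * (z \<bullet> ds) + (R *v z) \<bullet> (R *v z)"
      using exp[of z] lamp unfolding z_def by simp
    have B: "\<epsilon>^2 - d \<bullet> d = - 2 * (z \<bullet> ds) - z \<bullet> z"
      using dsds unfolding z_def by (simp add: inner_diff_left inner_diff_right inner_commute algebra_simps)
    have B': "lam * (\<epsilon>^2 - d \<bullet> d) = - 2 * lam * (z \<bullet> ds) - lam * (z \<bullet> z)"
      unfolding B by (simp add: algebra_simps)
    have "\<phi> d + lam * (\<epsilon>^2 - d \<bullet> d) \<le> \<phi> ds" using A B' so[of z] by linarith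
    then show "(u + R *v d) \<bullet> (u + R *v d) + lam * (\<epsilon>^2 - d \<bullet> d) \<le> (u + R *v ds) \<bullet> (u + R *v ds)"
      unfolding \<phi>_def .
  qed
qed



lemma sum_3: "sum f (UNIV :: ('a::finite + (unit + 'b::finite)) set) =
   sum (\<lambda>i. f (Inl i)) UNIV + f (Inr (Inl ())) + sum (\<lambda>j. f (Inr (Inr j))) UNIV"
  by (simp add: sum_UNIV_Plus UNIV_unit o_def add.assoc)

lemma mat1_sum: "(\<Sum>j\<in>UNIV. k * (mat 1 :: real^'n^'n) $ i $ j * g j) = k * g i"
  by (simp add: mat_def if_distrib if_distribR cong: if_cong)

lemma sum3_cases: "(\<And>i. p = Inl i \<Longrightarrow> P) \<Longrightarrow> (\<And>u. p = Inr (Inl u) \<Longrightarrow> P) \<Longrightarrow> (\<And>j. p = Inr (Inr j) \<Longrightarrow> P) \<Longrightarrow> P"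
  by (metis sum.exhaust)

context
  fixes H :: "real^'n^'n" and c x :: "real^'n" and \<epsilon> s \<mu> :: real and z :: "real^('n + (unit + 'n))"
begin

definition "Rm = mat_sqrt H"
definition "uu = Rm *v x + mat_inv_sqrt H *v c"
definition "za = (\<chi> i. z $ Inl i)"
definition "zb = z $ Inr (Inl ())"
definition "zw = (\<chi> j. z $ Inr (Inr j))"

lemma bm_entries:
  "block_mat H c x \<epsilon> s \<mu> $ Inl i $ Inl j = s * (mat 1 :: real^'n^'n) $ i $ j"
  "block_mat H c x \<epsilon> s \<mu> $ Inl i $ Inr (Inl u0) = uu $ i"
  "block_mat H c x \<epsilon> s \<mu> $ Inl i $ Inr (Inr j) = \<epsilon> * Rm $ i $ j"
  "block_mat H c x \<epsilon> s \<mu> $ Inr (Inl u0) $ Inl j = uu $ j"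
  "block_mat H c x \<epsilon> s \<mu> $ Inr (Inl u0) $ Inr (Inl u1) = s - \<mu>"
  "block_mat H c x \<epsilon> s \<mu> $ Inr (Inl u0) $ Inr (Inr j) = 0"
  "block_mat H c x \<epsilon> s \<mu> $ Inr (Inr i) $ Inl j = \<epsilon> * Rm $ i $ j"
  "block_mat H c x \<epsilon> s \<mu> $ Inr (Inr i) $ Inr (Inl u1) = 0"
  "block_mat H c x \<epsilon> s \<mu> $ Inr (Inr i) $ Inr (Inr j) = \<mu> * (mat 1 :: real^'n^'n) $ i $ j"
  by (simp_all add: block_mat_def Let_def Rm_def uu_def)

lemma bm_mv:
  "(block_mat H c x \<epsilon> s \<mu> *v z) $ Inl i = s * za $ i + zb * uu $ i + \<epsilon> * (Rm *v zw) $ i"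
  "(block_mat H c x \<epsilon> s \<mu> *v z) $ Inr (Inl u0) = uu \<bullet> za + (s - \<mu>) * zb"
  "(block_mat H c x \<epsilon> s \<mu> *v z) $ Inr (Inr i) = \<epsilon> * (Rm *v za) $ i + \<mu> * zw $ i"
  by (simp_all add: matrix_vector_mult_def sum_3 bm_entries mat1_sum za_def zb_def zw_def
      inner_vec_def sum_distrib_left ac_simps mat_def if_distrib if_distribR cong: if_cong)

lemma bm_quad:
  assumes "sym_mat Rm"
  shows "z \<bullet> (block_mat H c x \<epsilon> s \<mu> *v z) =
    s * (za \<bullet> za) + 2 * zb * (uu \<bullet> za) + 2 * \<epsilon> * (za \<bullet> (Rm *v zw)) + (s - \<mu>) * zb^2 + \<mu> * (zw \<bullet> zw)"
proof -
  have "z \<bullet> (block_mat H c x \<epsilon> s \<mu> *v z) =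
     (\<Sum>i\<in>UNIV. za $ i * (s * za $ i + zb * uu $ i + \<epsilon> * (Rm *v zw) $ i)) +
     zb * (uu \<bullet> za + (s - \<mu>) * zb) +
     (\<Sum>i\<in>UNIV. zw $ i * (\<epsilon> * (Rm *v za) $ i + \<mu> * zw $ i))"
    by (simp add: inner_vec_def sum_3 bm_mv za_def zb_def zw_def)
  also have "\<dots> = s * (za \<bullet> za) + zb * (uu \<bullet> za) + \<epsilon> * (za \<bullet> (Rm *v zw)) +
     zb * (uu \<bullet> za + (s - \<mu>) * zb) + \<epsilon> * (zw \<bullet> (Rm *v za)) + \<mu> * (zw \<bullet> zw)"
    by (simp add: inner_vec_def algebra_simps sum.distrib sum_distrib_left)
  also have "zw \<bullet> (Rm *v za) = za \<bullet> (Rm *v zw)"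
    using sym_inner[OF assms, of zw za] by (simp add: inner_commute)
  finally show ?thesis by (simp add: algebra_simps power2_eq_square)
qed

lemma bm_sym:
  assumes "sym_mat Rm"
  shows "sym_mat (block_mat H c x \<epsilon> s \<mu>)"
proof -
  have R: "Rm $ i $ j = Rm $ j $ i" for i j
    using assms unfolding sym_mat_def transpose_def by (metis vec_lambda_beta)
  have "block_mat H c x \<epsilon> s \<mu> $ q $ p = block_mat H c x \<epsilon> s \<mu> $ p $ q" for p q
    by (rule sum3_cases[of p]; rule sum3_cases[of q]) (auto simp: bm_entries R mat_def)
  then show ?thesis unfolding sym_mat_def transpose_def by (simp add: vec_eq_iff)
qed

end

lemma za_zb_zw_mk:
  fixes a w :: "real^'n" and b :: real
  defines "zz \<equiv> (\<chi> p. case p of Inl i \<Rightarrow> a $ i | Inr (Inl _) \<Rightarrow> b | Inr (Inr j) \<Rightarrow> w $ j) :: real^('n + (unit + 'n))"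
  shows "za zz = a" "zb zz = b" "zw zz = w"
  by (simp_all add: za_def zb_def zw_def zz_def vec_eq_iff)



theorem corollary6p2:
  fixes H :: "real^'n^'n" and c x :: "real^'n" and d \<epsilon> t :: real
  assumes "pos_def H" and "\<epsilon> > 0"
  shows "t \<ge> robust_sup (quad H c d) \<epsilon> x \<longleftrightarrow>
    (\<exists>s \<mu>::real. t - s^2 + c \<bullet> (matrix_inv H *v c) - d \<ge> 0 \<and> psd (block_mat H c x \<epsilon> s \<mu>))"
proof -
  note pdH = assms(1) and e = assms(2)
  define R where "R = mat_sqrt H"
  have pdR: "pos_def R" and RR: "R ** R = H" using mat_sqrt_props[OF pdH] by (simp_all add: R_def)
  have symR: "sym_mat R" using pdR by (simp add: pos_def_def)
  have symRm: "sym_mat (Rm H)" using symR by (simp add: Rm_def R_def)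
  have symH: "sym_mat H" using pdH by (simp add: pos_def_def)
  define Ri where "Ri = mat_inv_sqrt H"
  have Ri_def': "Ri = matrix_inv R" by (simp add: Ri_def mat_inv_sqrt_def R_def)
  have invR: "R ** Ri = mat 1" "Ri ** R = mat 1"
    using inv_props[OF pd_invertible[OF pdR]] by (simp_all add: Ri_def')
  have RRi: "R *v (Ri *v y) = y" for y using invR(1) by (simp add: matrix_vector_mul_assoc)
  have RiR: "Ri *v (R *v y) = y" for y using invR(2) by (simp add: matrix_vector_mul_assoc)
  define Hi where "Hi = matrix_inv H"
  have invH: "Hi ** H = mat 1" using inv_props[OF pd_invertible[OF pdH]] by (simp add: Hi_def)
  have HR: "H *v y = R *v (R *v y)" for y using RR by (simp add: matrix_vector_mul_assoc)
  have symRi: "sym_mat Ri"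
  proof (rule inner_sym)
    fix a b
    have "a \<bullet> (Ri *v b) = (R *v (Ri *v a)) \<bullet> (Ri *v b)" by (simp add: RRi)
    also have "\<dots> = (Ri *v a) \<bullet> (R *v (Ri *v b))" using sym_inner[OF symR, of "Ri *v a" "Ri *v b"]
      by (simp add: inner_commute)
    also have "\<dots> = (Ri *v a) \<bullet> b" by (simp add: RRi)
    finally show "a \<bullet> (Ri *v b) = (Ri *v a) \<bullet> b" .
  qed
  have Hic: "Hi *v y = Ri *v (Ri *v y)" for y
  proof -
    have "H *v (Ri *v (Ri *v y)) = y" by (simp add: HR RRi)
    hence "Hi *v (H *v (Ri *v (Ri *v y))) = Hi *v y" by simp
    moreover have "Hi *v (H *v z) = z" for z using invH by (simp add: matrix_vector_mul_assoc)
    ultimately show ?thesis by simp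
  qed
  define C where "C = c \<bullet> (Hi *v c) - d"
  define u where "u = R *v x + Ri *v c"
  have uu: "uu H c x = u" by (simp add: uu_def u_def Rm_def R_def Ri_def)
  have ID: "quad H c d y + C = (R *v y + Ri *v c) \<bullet> (R *v y + Ri *v c)" for y
  proof -
    have 1: "(R *v y) \<bullet> (R *v y) = y \<bullet> (H *v y)"
      using sym_inner[OF symR, of y "R *v y"] by (simp add: HR)
    have 2: "(R *v y) \<bullet> (Ri *v c) = y \<bullet> c"
      using sym_inner[OF symR, of y "Ri *v c"] by (simp add: RRi)
    have 3: "(Ri *v c) \<bullet> (Ri *v c) = c \<bullet> (Hi *v c)"
      using sym_inner[OF symRi, of c "Ri *v c"] by (simp add: Hic)
    show ?thesis unfolding quad_def C_def
      by (simp add: inner_add_left inner_add_right 1 2 3 inner_commute)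
  qed
  have IDd: "quad H c d (x + dl) + C = (u + R *v dl) \<bullet> (u + R *v dl)" for dl
    unfolding ID u_def by (simp add: matrix_vector_right_distrib algebra_simps)
  define Set where "Set = {quad H c d x' | x'. norm (x' - x) \<le> \<epsilon>}"
  have rs: "robust_sup (quad H c d) \<epsilon> x = Sup Set" by (simp add: robust_sup_def Set_def)
  have memSet: "q \<in> Set \<longleftrightarrow> (\<exists>dl. norm dl \<le> \<epsilon> \<and> q = quad H c d (x + dl))" for q
  proof
    assume "q \<in> Set"
    then obtain x' where "q = quad H c d x'" "norm (x' - x) \<le> \<epsilon>" unfolding Set_def by blast
    then show "\<exists>dl. norm dl \<le> \<epsilon> \<and> q = quad H c d (x + dl)" by (intro exI[of _ "x' - x"]) simp
  next
    assume "\<exists>dl. norm dl \<le> \<epsilon> \<and> q = quad H c d (x + dl)"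
    then obtain dl where "norm dl \<le> \<epsilon>" "q = quad H c d (x + dl)" by blast
    then show "q \<in> Set" unfolding Set_def by (intro CollectI exI[of _ "x + dl"]) simp
  qed
  have "quad H c d (x + 0) \<in> Set" unfolding memSet by (rule exI[of _ 0]) (use e in simp)
  hence Setne: "Set \<noteq> {}" by blast
  obtain K where K: "\<And>y. norm (R *v y) \<le> norm y * K" "K > 0"
    using bounded_linear.pos_bounded[OF matrix_vector_mul_bounded_linear[of R]] by blast
  have nsq: "(u + R *v dl) \<bullet> (u + R *v dl) \<le> (norm u + \<epsilon> * K)^2" if "norm dl \<le> \<epsilon>" for dl
  proof -
    have "norm (u + R *v dl) \<le> norm u + norm (R *v dl)" by (rule norm_triangle_ineq)
    also have "\<dots> \<le> norm u + \<epsilon> * K"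
    proof -
      have "norm dl * K \<le> \<epsilon> * K" using mult_right_mono[OF that less_imp_le[OF K(2)]] .
      then show ?thesis using K(1)[of dl] by linarith
    qed
    finally have "norm (u + R *v dl) \<le> norm u + \<epsilon> * K" .
    hence "(norm (u + R *v dl))^2 \<le> (norm u + \<epsilon> * K)^2" by (simp add: power_mono)
    then show ?thesis by (simp add: power2_norm_eq_inner)
  qed
  have bdd: "bdd_above Set"
    unfolding bdd_above_def
  proof (intro exI ballI)
    fix q assume "q \<in> Set"
    then obtain dl where "norm dl \<le> \<epsilon>" "q = quad H c d (x + dl)" using memSet by blast
    then show "q \<le> (norm u + \<epsilon> * K)^2 - C" using IDd[of dl] nsq[of dl] by simp
  qed
  show ?thesis
  proof
    assume "t \<ge> robust_sup (quad H c d) \<epsilon> x"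
    hence tS: "Sup Set \<le> t" by (simp add: rs)
    define T where "T = t + C"
    have bT: "(u + R *v dl) \<bullet> (u + R *v dl) \<le> T" if "norm dl \<le> \<epsilon>" for dl
    proof -
      have "quad H c d (x + dl) \<in> Set" using memSet that by blast
      hence "quad H c d (x + dl) \<le> Sup Set" using bdd by (rule cSup_upper)
      then show ?thesis using tS IDd[of dl] by (simp add: T_def)
    qed
    have "u \<bullet> u \<le> T" using bT[of 0] e by simp
    hence T0: "T \<ge> 0" using inner_ge_zero[of u] by linarith
    define s where "s = sqrt T"
    have s2: "s^2 = T" using T0 by (simp add: s_def)
    have spos: "s > 0"
    proof (rule ccontr)
      assume "\<not> s > 0"
      hence "T = 0" using T0 s2 by (simp add: s_def)
      hence z: "u + R *v dl = 0" if "norm dl \<le> \<epsilon>" for dl using bT[OF that] inner_ge_zero[of "u + R *v dl"]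
        by simp
      obtain i :: 'n where True by simp
      have "u = 0" using z[of 0] e by simp
      moreover have "norm (\<epsilon> *\<^sub>R axis i (1::real)) \<le> \<epsilon>" using e by (simp add: norm_axis_1)
      ultimately have "R *v (\<epsilon> *\<^sub>R axis i 1) = 0" using z by fastforce
      hence "\<epsilon> *\<^sub>R axis i (1::real) = 0" by (rule pd_ker[OF pdR])
      then show False using e by (simp add: axis_eq_0_iff)
    qed
    obtain \<kappa> ds where kap: "norm ds \<le> \<epsilon>" "\<And>z. (R *v z) \<bullet> (R *v z) \<le> \<kappa> * (z \<bullet> z)"
      "\<And>dl. (u + R *v dl) \<bullet> (u + R *v dl) + \<kappa> * (\<epsilon>^2 - dl \<bullet> dl) \<le> (u + R *v ds) \<bullet> (u + R *v ds)"
      using s_lemma[OF symR pdR e, of u] by blast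
    have kap3: "(u + R *v dl) \<bullet> (u + R *v dl) + \<kappa> * (\<epsilon>^2 - dl \<bullet> dl) \<le> s^2" for dl
      using kap(3)[of dl] bT[OF kap(1)] s2 by linarith
    define \<mu> where "\<mu> = \<kappa> * \<epsilon>^2 / s"
    have smu: "s * \<mu> = \<kappa> * \<epsilon>^2" using spos by (simp add: \<mu>_def)
    have "psd (block_mat H c x \<epsilon> s \<mu>)"
      unfolding psd_def
    proof (intro conjI allI)
      show "sym_mat (block_mat H c x \<epsilon> s \<mu>)" by (rule bm_sym[OF symRm])
      fix z :: "real^('n + (unit + 'n))"
      define a where "a = za z"
      define b where "b = zb z"
      define w where "w = zw z"
      have Q: "z \<bullet> (block_mat H c x \<epsilon> s \<mu> *v z) =
        s * (a \<bullet> a) + 2 * b * (u \<bullet> a) + 2 * \<epsilon> * (a \<bullet> (R *v w)) + (s - \<mu>) * b^2 + \<mu> * (w \<bullet> w)"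
        using bm_quad[OF symRm] by (simp add: a_def b_def w_def uu Rm_def R_def)
      define p where "p = b *\<^sub>R u + \<epsilon> *\<^sub>R (R *v w)"
      have ap: "2 * b * (u \<bullet> a) + 2 * \<epsilon> * (a \<bullet> (R *v w)) = 2 * (a \<bullet> p)"
        by (simp add: p_def inner_add_right inner_commute algebra_simps)
      have c1: "s * (a \<bullet> a) + 2 * (a \<bullet> p) \<ge> - (p \<bullet> p) / s"
      proof -
        have "0 \<le> (s *\<^sub>R a + p) \<bullet> (s *\<^sub>R a + p)" by simp
        also have "\<dots> = s * (s * (a \<bullet> a) + 2 * (a \<bullet> p)) + p \<bullet> p"
          by (simp add: inner_add_left inner_add_right inner_commute algebra_simps)
        finally have "- (p \<bullet> p) \<le> s * (s * (a \<bullet> a) + 2 * (a \<bullet> p))" by linarith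
        hence "- (p \<bullet> p) / s \<le> s * (s * (a \<bullet> a) + 2 * (a \<bullet> p)) / s"
          using spos by (intro divide_right_mono) auto
        then show ?thesis using spos by simp
      qed
      have c2: "p \<bullet> p \<le> s * ((s - \<mu>) * b^2 + \<mu> * (w \<bullet> w))"
      proof (cases "b = 0")
        case b0: True
        have "p \<bullet> p = \<epsilon>^2 * ((R *v w) \<bullet> (R *v w))" using b0 by (simp add: p_def power2_eq_square)
        also have "\<dots> \<le> \<epsilon>^2 * (\<kappa> * (w \<bullet> w))" using kap(2)[of w] by (simp add: mult_left_mono)
        also have "\<dots> = s * ((s - \<mu>) * b^2 + \<mu> * (w \<bullet> w))" using b0 smu by (simp add: algebra_simps)
        finally show ?thesis .
      next
        case False
        define dl where "dl = (\<epsilon> / b) *\<^sub>R w"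
        have pe: "p = b *\<^sub>R (u + R *v dl)" using False
          by (simp add: p_def dl_def matrix_vector_mult_scaleR scaleR_add_right)
        have dd: "b^2 * (dl \<bullet> dl) = \<epsilon>^2 * (w \<bullet> w)" using False
          by (simp add: dl_def power2_eq_square field_simps)
        have "p \<bullet> p = b^2 * ((u + R *v dl) \<bullet> (u + R *v dl))" by (simp add: pe power2_eq_square)
        also have "\<dots> \<le> b^2 * (s^2 - \<kappa> * (\<epsilon>^2 - dl \<bullet> dl))"
          using kap3[of dl] by (intro mult_left_mono) auto
        also have "\<dots> = b^2 * s^2 - \<kappa> * \<epsilon>^2 * b^2 + \<kappa> * (b^2 * (dl \<bullet> dl))" by (simp add: algebra_simps)
        also have "\<dots> = b^2 * s^2 - (s * \<mu>) * b^2 + (s * \<mu>) * (w \<bullet> w)" unfolding smu dd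
          by (simp add: algebra_simps)
        also have "\<dots> = s * ((s - \<mu>) * b^2 + \<mu> * (w \<bullet> w))" by (simp add: algebra_simps power2_eq_square)
        finally show ?thesis .
      qed
      have "- (p \<bullet> p) / s + ((s - \<mu>) * b^2 + \<mu> * (w \<bullet> w)) \<ge> 0"
        using c2 spos by (simp add: field_simps)
      then show "0 \<le> z \<bullet> (block_mat H c x \<epsilon> s \<mu> *v z)" unfolding Q using c1 ap by linarith
    qed
    moreover have "t - s^2 + c \<bullet> (matrix_inv H *v c) - d \<ge> 0"
      using s2 by (simp add: T_def C_def Hi_def)
    ultimately show "\<exists>s \<mu>::real. t - s^2 + c \<bullet> (matrix_inv H *v c) - d \<ge> 0 \<and> psd (block_mat H c x \<epsilon> s \<mu>)"
      by blast
  next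
    assume "\<exists>s \<mu>::real. t - s^2 + c \<bullet> (matrix_inv H *v c) - d \<ge> 0 \<and> psd (block_mat H c x \<epsilon> s \<mu>)"
    then obtain s \<mu> where st0: "t - s^2 + c \<bullet> (matrix_inv H *v c) - d \<ge> 0"
      and ps: "psd (block_mat H c x \<epsilon> s \<mu>)" by blast
    have st: "t - s^2 + C \<ge> 0" unfolding C_def Hi_def using st0 by linarith
    have Q: "0 \<le> s * (a \<bullet> a) + 2 * b * (u \<bullet> a) + 2 * \<epsilon> * (a \<bullet> (R *v w)) + (s - \<mu>) * b^2 + \<mu> * (w \<bullet> w)"
      for a w :: "real^'n" and b :: real
    proof -
      define zz where "zz = ((\<chi> p. case p of Inl i \<Rightarrow> a $ i | Inr (Inl _) \<Rightarrow> b | Inr (Inr j) \<Rightarrow> w $ j)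
         :: real^('n + (unit + 'n)))"
      have "0 \<le> zz \<bullet> (block_mat H c x \<epsilon> s \<mu> *v zz)" using ps by (simp add: psd_def)
      also have "\<dots> = s * (a \<bullet> a) + 2 * b * (u \<bullet> a) + 2 * \<epsilon> * (a \<bullet> (R *v w)) + (s - \<mu>) * b^2 + \<mu> * (w \<bullet> w)"
        using bm_quad[OF symRm, of zz] za_zb_zw_mk[of a b w] unfolding zz_def
        by (simp add: uu Rm_def R_def)
      finally show ?thesis .
    qed
    obtain i :: 'n where True by simp
    have mu0: "\<mu> \<ge> 0" using Q[where a=0 and b=0 and w="axis i 1"] by (simp add: inner_axis_axis)
    have s0: "s \<ge> 0" using Q[where a="axis i 1" and b=0 and w=0] by (simp add: inner_axis_axis)
    show "t \<ge> robust_sup (quad H c d) \<epsilon> x"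
      unfolding rs
    proof (rule cSup_least[OF Setne])
      fix q assume "q \<in> Set"
      then obtain dl where dl: "norm dl \<le> \<epsilon>" "q = quad H c d (x + dl)" using memSet by blast
      define v where "v = u + R *v dl"
      have dd: "dl \<bullet> dl \<le> \<epsilon>^2" using dl(1) e
        by (metis norm_ge_zero power2_norm_eq_inner power_mono)
      have Qa: "0 \<le> s * (a \<bullet> a) + 2 * (a \<bullet> v) + s" for a
      proof -
        have "0 \<le> s * (a \<bullet> a) + 2 * 1 * (u \<bullet> a) + 2 * \<epsilon> * (a \<bullet> (R *v ((1/\<epsilon>) *\<^sub>R dl))) + (s - \<mu>) * 1^2
           + \<mu> * (((1/\<epsilon>) *\<^sub>R dl) \<bullet> ((1/\<epsilon>) *\<^sub>R dl))" by (rule Q)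
        also have "\<dots> = s * (a \<bullet> a) + 2 * (a \<bullet> v) + s - \<mu> * (1 - (dl \<bullet> dl) / \<epsilon>^2)"
          using e by (simp add: v_def matrix_vector_mult_scaleR inner_add_right inner_commute
              field_simps power2_eq_square)
        also have "\<dots> \<le> s * (a \<bullet> a) + 2 * (a \<bullet> v) + s"
        proof -
          have "(dl \<bullet> dl) / \<epsilon>^2 \<le> 1" using dd e by simp
          then show ?thesis using mu0 by (simp add: mult_nonneg_nonneg)
        qed
        finally show ?thesis .
      qed
      have vv: "v \<bullet> v \<le> s^2"
      proof (cases "s = 0")
        case True
        then show ?thesis using Qa[of "- v"] by simp
      next
        case False
        hence sp: "s > 0" using s0 by simp
        have "0 \<le> s * (((-1/s) *\<^sub>R v) \<bullet> ((-1/s) *\<^sub>R v)) + 2 * (((-1/s) *\<^sub>R v) \<bullet> v) + s" by (rule Qa)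
        also have "\<dots> = s - (v \<bullet> v) / s" using sp by (simp add: field_simps power2_eq_square)
        finally show ?thesis using sp by (simp add: field_simps power2_eq_square)
      qed
      have "q + C = v \<bullet> v" using IDd[of dl] dl(2) by (simp add: v_def)
      then show "q \<le> t" using vv st by linarith
    qed
  qed
qed


end
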